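(* Let $n\ge4$, let $\sigma,\tau\in\Sigma_n$, let $\mathbf A\in\mathcal G_n$, and let $\mathbf X=D^\sigma(\mathbf A)$ and $\mathbf X'=D^\tau(\mathbf A)$ (both with underlying set $\mathcal G_n(\mathbf A,\mathbf C_n)$). Then (i) the relations $\simeq^\sigma_{\mathbf X}$ and $\simeq^\tau_{\mathbf X'}$ coincide; (ii) the relations $\le^\sigma_{\mathbf X}$ and $\le^\tau_{\mathbf X'}$ coincide. Moreover, for every $\sigma\in\Sigma_n$, $\le^\sigma_{\mathbf X}$ is a partial order on $X/{\simeq^\sigma_{\mathbf X}}$ of depth at most $n-2$, whose covering relation is $\prec^\sigma_{\mathbf X}$.
   Context: $\mathbf C_n$ is the Heyting algebra on the chain $\{0<1<\dots<n-1\}$, with min, max, $\bot=0$, $\top=n-1$, $a\to b=\top$ if $a\le b$, $a\to b=b$ if $b<a$. $\mathcal G_n$ is the class of algebras isomorphic to subalgebras of direct powers of $\mathbf C_n$; $\mathcal G_n(\mathbf A,\mathbf C_n)$ is the set of Heyting homomorphisms $\mathbf A\to\mathbf C_n$. For $n\ge4$: for $1\le i\le n-2$, $h_i$ is the endomorphism of $\mathbf C_n$ with $h_i(k)=k+1$ if $i\le k<n-1$ and $h_i(k)=k$ otherwise. For $1\le i\le n-3$, $g_i$ is the partial map with domain $C_n\setminus\{i\}$ with $g_i(i+1)=i$ and $g_i(k)=k$ for $k\notin\{i,i+1\}$, and $f_i\colon C_n\setminus\{i+1\}\to C_n\setminus\{i\}$ is its inverse. $\Sigma_n=\{f_1,g_1\}\times\dots\times\{f_{n-3},g_{n-3}\}\times\{h_1,\dots,h_{n-2}\}$,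 elements written $\sigma=(\sigma_1,\dots,\sigma_{n-2})$. $D^\sigma(\mathbf A)$ is the set $\mathcal G_n(\mathbf A,\mathbf C_n)$ (with the topology inherited from the product of discrete spaces $C_n^A$) equipped with the lifted (partial) operations $\sigma_i^{\mathbf X}(x)=\sigma_i\circ x$, defined iff $\operatorname{ran}x\subseteq\operatorname{dom}\sigma_i$. For such $\mathbf X$: $x\simeq^\sigma_{\mathbf X}y$ iff $x=y$ or there is a finite sequence $x=z_0,\dots,z_N=y$ in $X$ such that for each $j<N$ some $i_j\in\{1,\dots,n-3\}$ satisfies $z_{j+1}=\sigma_{i_j}^{\mathbf X}(z_j)$ or $z_j=\sigma_{i_j}^{\mathbf X}(z_{j+1})$; this is an equivalence relation, with classes $[x]$. On $X/{\simeq^\sigma_{\mathbf X}}$ define $[x]\prec^\sigma_{\mathbf X}[y]$ iff $x\not\simeq^\sigma_{\mathbf X}y$ and there exists $z\simeq^\sigma_{\mathbf X}x$ with $\sigma_{n-2}^{\mathbf X}(z)\simeq^\sigma_{\mathbf X}y$; $\le^\sigma_{\mathbf X}$ is the reflexive transitive closure of $\prec^\sigma_{\mathbf X}$. Depth: in a poset $P$ where no ${\uparrow}p$ contains an infinite ascending chain, $d(p)=\max\{|C|-1: C\subseteq{\uparrow}p \text{ a chain}\}$, and the depth of $P$ is $\sup_p d(p)$. *)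

theory Defs
  imports Main "HOL-Library.FuncSet"
begin

record 'a halg =
  hcarrier :: "'a set"
  hmeet :: "'a \<Rightarrow> 'a \<Rightarrow> 'a"
  hjoin :: "'a \<Rightarrow> 'a \<Rightarrow> 'a"
  himp :: "'a \<Rightarrow> 'a \<Rightarrow> 'a"
  hbot :: "'a"
  htop :: "'a"

definition is_halg :: "'a halg \<Rightarrow> bool" where
  "is_halg A \<longleftrightarrow> hbot A \<in> hcarrier A \<and> htop A \<in> hcarrier A \<and>
     (\<forall>a\<in>hcarrier A. \<forall>b\<in>hcarrier A.
        hmeet A a b \<in> hcarrier A \<and> hjoin A a b \<in> hcarrier A \<and> himp A a b \<in> hcarrier A)"

definition cimp :: "nat \<Rightarrow> nat \<Rightarrow> nat \<Rightarrow> nat" where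
  "cimp n a b = (if a \<le> b then n - 1 else b)"

definition is_hom :: "nat \<Rightarrow> 'a halg \<Rightarrow> ('a \<Rightarrow> nat) \<Rightarrow> bool" where
  "is_hom n A h \<longleftrightarrow>
     (\<forall>a\<in>hcarrier A. h a < n) \<and>
     h (hbot A) = 0 \<and> h (htop A) = n - 1 \<and>
     (\<forall>a\<in>hcarrier A. \<forall>b\<in>hcarrier A.
        h (hmeet A a b) = min (h a) (h b) \<and>
        h (hjoin A a b) = max (h a) (h b) \<and>
        h (himp A a b) = cimp n (h a) (h b))"

definition homs :: "nat \<Rightarrow> 'a halg \<Rightarrow> ('a \<Rightarrow> nat) set" where
  "homs n A = {h \<in> hcarrier A \<rightarrow>\<^sub>E {..<n}. is_hom n A h}"

text \<open>A \<in> G_n: A is isomorphic to a subalgebra of a direct power C_n^I, i.e.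
  there is an injective homomorphism A \<rightarrow> C_n^I, given by a family (e i)_{i\<in>I}
  of homomorphisms A \<rightarrow> C_n that separates points.\<close>
definition in_Gn :: "'i itself \<Rightarrow> nat \<Rightarrow> 'a halg \<Rightarrow> bool" where
  "in_Gn _ n A \<longleftrightarrow> is_halg A \<and>
     (\<exists>(I :: 'i set) (e :: 'i \<Rightarrow> 'a \<Rightarrow> nat).
        (\<forall>i\<in>I. is_hom n A (e i)) \<and>
        (\<forall>a\<in>hcarrier A. \<forall>b\<in>hcarrier A. a \<noteq> b \<longrightarrow> (\<exists>i\<in>I. e i a \<noteq> e i b)))"

definition hmap :: "nat \<Rightarrow> nat \<Rightarrow> nat \<Rightarrow> nat option" where
  "hmap n i k = (if k < n then Some (if i \<le> k \<and> k < n - 1 then k + 1 else k) else None)"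

definition gmap :: "nat \<Rightarrow> nat \<Rightarrow> nat \<Rightarrow> nat option" where
  "gmap n i k = (if k < n \<and> k \<noteq> i then Some (if k = i + 1 then i else k) else None)"

definition fmap :: "nat \<Rightarrow> nat \<Rightarrow> nat \<Rightarrow> nat option" where
  "fmap n i k = (if k < n \<and> k \<noteq> i + 1 then Some (if k = i then i + 1 else k) else None)"

text \<open>\<sigma> = (\<sigma>_1, ..., \<sigma>_{n-2}) represented as a function on indices; only
  indices 1..n-2 matter.\<close>
definition in_Sigma :: "nat \<Rightarrow> (nat \<Rightarrow> (nat \<Rightarrow> nat option)) \<Rightarrow> bool" where
  "in_Sigma n \<sigma> \<longleftrightarrow>
     (\<forall>i\<in>{1..n-3}. \<sigma> i = fmap n i \<or> \<sigma> i = gmap n i) \<and>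
     (\<exists>j\<in>{1..n-2}. \<sigma> (n - 2) = hmap n j)"

definition lift :: "'a halg \<Rightarrow> (nat \<Rightarrow> nat option) \<Rightarrow> ('a \<Rightarrow> nat) \<Rightarrow> ('a \<Rightarrow> nat) option" where
  "lift A s x = (if (\<forall>a\<in>hcarrier A. x a \<in> dom s)
                 then Some (\<lambda>a\<in>hcarrier A. the (s (x a))) else None)"

definition sstep :: "nat \<Rightarrow> 'a halg \<Rightarrow> (nat \<Rightarrow> (nat \<Rightarrow> nat option)) \<Rightarrow> (('a \<Rightarrow> nat) \<times> ('a \<Rightarrow> nat)) set" where
  "sstep n A \<sigma> = {(x, y). x \<in> homs n A \<and> y \<in> homs n A \<and>
      (\<exists>i\<in>{1..n-3}. lift A (\<sigma> i) x = Some y \<or> lift A (\<sigma> i) y = Some x)}"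

definition simeq :: "nat \<Rightarrow> 'a halg \<Rightarrow> (nat \<Rightarrow> (nat \<Rightarrow> nat option)) \<Rightarrow> (('a \<Rightarrow> nat) \<times> ('a \<Rightarrow> nat)) set" where
  "simeq n A \<sigma> = {(x, y). x \<in> homs n A \<and> y \<in> homs n A \<and> (x = y \<or> (x, y) \<in> (sstep n A \<sigma>)\<^sup>+)}"

definition classes :: "nat \<Rightarrow> 'a halg \<Rightarrow> (nat \<Rightarrow> (nat \<Rightarrow> nat option)) \<Rightarrow> ('a \<Rightarrow> nat) set set" where
  "classes n A \<sigma> = homs n A // simeq n A \<sigma>"

definition prec :: "nat \<Rightarrow> 'a halg \<Rightarrow> (nat \<Rightarrow> (nat \<Rightarrow> nat option)) \<Rightarrow> (('a \<Rightarrow> nat) set \<times> ('a \<Rightarrow> nat) set) set" where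
  "prec n A \<sigma> = {(c, d). c \<in> classes n A \<sigma> \<and> d \<in> classes n A \<sigma> \<and> c \<noteq> d \<and>
      (\<exists>z\<in>c. \<exists>w\<in>d. lift A (\<sigma> (n - 2)) z = Some w)}"

definition leq :: "nat \<Rightarrow> 'a halg \<Rightarrow> (nat \<Rightarrow> (nat \<Rightarrow> nat option)) \<Rightarrow> (('a \<Rightarrow> nat) set \<times> ('a \<Rightarrow> nat) set) set" where
  "leq n A \<sigma> = {(c, d). c \<in> classes n A \<sigma> \<and> d \<in> classes n A \<sigma> \<and> (c, d) \<in> (prec n A \<sigma>)\<^sup>*}"

definition covers :: "('b \<times> 'b) set \<Rightarrow> ('b \<times> 'b) set" where
  "covers r = {(c, d). (c, d) \<in> r \<and> c \<noteq> d \<and>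
      \<not> (\<exists>e. (c, e) \<in> r \<and> (e, d) \<in> r \<and> e \<noteq> c \<and> e \<noteq> d)}"

definition depth_le :: "'b set \<Rightarrow> ('b \<times> 'b) set \<Rightarrow> nat \<Rightarrow> bool" where
  "depth_le P r k \<longleftrightarrow>
     (\<forall>p\<in>P. \<not> (\<exists>f :: nat \<Rightarrow> 'b. f 0 = p \<and> (\<forall>m. (f m, f (Suc m)) \<in> r \<and> f m \<noteq> f (Suc m)))) \<and>
     (\<forall>p\<in>P. \<forall>C. C \<subseteq> {q \<in> P. (p, q) \<in> r} \<and> (\<forall>a\<in>C. \<forall>b\<in>C. (a, b) \<in> r \<or> (b, a) \<in> r)
         \<longrightarrow> finite C \<and> card C - 1 \<le> k)"

end

theory Submission
  imports Defs
begin


definition same :: "'a halg \<Rightarrow> ('a \<Rightarrow> nat) \<Rightarrow> ('a \<Rightarrow> nat) \<Rightarrow> bool" where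
 "same A x y \<longleftrightarrow> (\<forall>a\<in>hcarrier A. \<forall>b\<in>hcarrier A. (x a \<le> x b) = (y a \<le> y b))"

lemma homsD: assumes "x \<in> homs n A"
  shows "x \<in> extensional (hcarrier A)" "\<And>a. a \<in> hcarrier A \<Longrightarrow> x a < n" "is_hom n A x"
  using assms unfolding homs_def by (auto simp: PiE_def)

lemma lift_gmap: "lift A (gmap n i) x = (if (\<forall>a\<in>hcarrier A. x a < n \<and> x a \<noteq> i)
   then Some (\<lambda>a\<in>hcarrier A. if x a = i+1 then i else x a) else None)"
  unfolding lift_def gmap_def dom_def by (auto intro!: restrict_ext)

lemma lift_fmap: "lift A (fmap n i) x = (if (\<forall>a\<in>hcarrier A. x a < n \<and> x a \<noteq> i+1)
   then Some (\<lambda>a\<in>hcarrier A. if x a = i then i+1 else x a) else None)"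
  unfolding lift_def fmap_def dom_def by (auto intro!: restrict_ext)

lemma lift_hmap: "lift A (hmap n j) x = (if (\<forall>a\<in>hcarrier A. x a < n)
   then Some (\<lambda>a\<in>hcarrier A. if j \<le> x a \<and> x a < n - 1 then x a + 1 else x a) else None)"
  unfolding lift_def hmap_def dom_def by (auto intro!: restrict_ext)

lemma fg: assumes "x \<in> homs n A" "y \<in> homs n A"
  shows "lift A (fmap n i) x = Some y \<longleftrightarrow> lift A (gmap n i) y = Some x"
proof
  assume h: "lift A (fmap n i) x = Some y"
  hence y: "y = (\<lambda>a\<in>hcarrier A. if x a = i then i+1 else x a)" and xa: "\<forall>a\<in>hcarrier A. x a < n \<and> x a \<noteq> i+1"
    unfolding lift_fmap by (auto split: if_splits)
  have "(\<lambda>a\<in>hcarrier A. if y a = i+1 then i else y a) = x"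
    using homsD(1)[OF assms(1)] xa unfolding y by (auto simp: extensional_def fun_eq_iff)
  thus "lift A (gmap n i) y = Some x" using xa homsD(2)[OF assms(2)] unfolding lift_gmap y by auto
next
  assume h: "lift A (gmap n i) y = Some x"
  hence x: "x = (\<lambda>a\<in>hcarrier A. if y a = i+1 then i else y a)" and ya: "\<forall>a\<in>hcarrier A. y a < n \<and> y a \<noteq> i"
    unfolding lift_gmap by (auto split: if_splits)
  have "(\<lambda>a\<in>hcarrier A. if x a = i then i+1 else x a) = y"
    using homsD(1)[OF assms(2)] ya unfolding x by (auto simp: extensional_def fun_eq_iff)
  thus "lift A (fmap n i) x = Some y" using ya homsD(2)[OF assms(1)] unfolding lift_fmap x by auto
qed

lemma hom_comp:
  assumes x: "x \<in> homs n A" and ha: "is_halg A"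
    and p1: "\<forall>u\<in>x`hcarrier A. \<phi> u < n" and p2: "\<phi> 0 = 0" and p3: "\<phi> (n-1) = n-1"
    and p4: "\<forall>u\<in>x`hcarrier A. \<forall>v\<in>x`hcarrier A. u \<le> v \<longrightarrow> \<phi> u \<le> \<phi> v"
    and p5: "\<forall>u\<in>x`hcarrier A. \<forall>v\<in>x`hcarrier A. v < u \<longrightarrow> \<phi> v < \<phi> u \<or> \<phi> v = n-1"
  shows "(\<lambda>a\<in>hcarrier A. \<phi> (x a)) \<in> homs n A"
proof -
  have h: "is_hom n A x" using homsD[OF x] by auto
  have cl: "hbot A \<in> hcarrier A" "htop A \<in> hcarrier A"
    "\<And>a b. a \<in> hcarrier A \<Longrightarrow> b \<in> hcarrier A \<Longrightarrow> hmeet A a b \<in> hcarrier A \<and> hjoin A a b \<in> hcarrier A \<and> himp A a b \<in> hcarrier A"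
    using ha unfolding is_halg_def by auto
  have "is_hom n A (\<lambda>a\<in>hcarrier A. \<phi> (x a))"
    unfolding is_hom_def
  proof (intro conjI ballI)
    show "(\<lambda>a\<in>hcarrier A. \<phi> (x a)) a < n" if "a \<in> hcarrier A" for a using p1 that by auto
    show "(\<lambda>a\<in>hcarrier A. \<phi> (x a)) (hbot A) = 0" using cl h p2 unfolding is_hom_def by auto
    show "(\<lambda>a\<in>hcarrier A. \<phi> (x a)) (htop A) = n-1" using cl h p3 unfolding is_hom_def by auto
    fix a b assume a: "a \<in> hcarrier A" and b: "b \<in> hcarrier A"
    have xa: "x a \<in> x`hcarrier A" "x b \<in> x`hcarrier A" using a b by auto
    show "(\<lambda>a\<in>hcarrier A. \<phi> (x a)) (hmeet A a b) = min ((\<lambda>a\<in>hcarrier A. \<phi> (x a)) a) ((\<lambda>a\<in>hcarrier A. \<phi> (x a)) b)"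
      using cl(3)[OF a b] h a b p4 xa unfolding is_hom_def by (auto simp: min_def intro: le_antisym)
    show "(\<lambda>a\<in>hcarrier A. \<phi> (x a)) (hjoin A a b) = max ((\<lambda>a\<in>hcarrier A. \<phi> (x a)) a) ((\<lambda>a\<in>hcarrier A. \<phi> (x a)) b)"
      using cl(3)[OF a b] h a b p4 xa unfolding is_hom_def by (auto simp: max_def intro: le_antisym)
    have "\<phi> (cimp n (x a) (x b)) = cimp n (\<phi> (x a)) (\<phi> (x b))"
      using p4 p5 xa p3 unfolding cimp_def by (smt (verit) leD le_refl linorder_not_le)
    thus "(\<lambda>a\<in>hcarrier A. \<phi> (x a)) (himp A a b) = cimp n ((\<lambda>a\<in>hcarrier A. \<phi> (x a)) a) ((\<lambda>a\<in>hcarrier A. \<phi> (x a)) b)"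
      using cl(3)[OF a b] h a b unfolding is_hom_def by auto
  qed
  thus ?thesis unfolding homs_def using p1 by auto
qed


lemma same_refl: "same A x x" unfolding same_def by auto
lemma same_sym: "same A x y \<Longrightarrow> same A y x" unfolding same_def by auto
lemma same_trans: "same A x y \<Longrightarrow> same A y z \<Longrightarrow> same A x z" unfolding same_def by auto

lemma fmap_same: "lift A (fmap n i) x = Some y \<Longrightarrow> same A x y"
  unfolding lift_fmap same_def by (auto split: if_splits)
lemma gmap_same: "lift A (gmap n i) x = Some y \<Longrightarrow> same A x y"
  unfolding lift_gmap same_def by (auto split: if_splits)

lemma sstep_same: assumes "in_Sigma n \<sigma>" "(x,y) \<in> sstep n A \<sigma>" shows "same A x y"
proof -
  obtain i where i: "i \<in> {1..n-3}" "lift A (\<sigma> i) x = Some y \<or> lift A (\<sigma> i) y = Some x"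
    using assms(2) unfolding sstep_def by auto
  have "\<sigma> i = fmap n i \<or> \<sigma> i = gmap n i" using assms(1) i(1) unfolding in_Sigma_def by auto
  thus ?thesis using i(2) fmap_same gmap_same same_sym by metis
qed

lemma sstep_indep: assumes "in_Sigma n \<sigma>" "in_Sigma n \<tau>" shows "sstep n A \<sigma> = sstep n A \<tau>"
proof -
  have *: "(lift A (\<sigma> i) x = Some y \<or> lift A (\<sigma> i) y = Some x) \<longleftrightarrow>
     (lift A (\<tau> i) x = Some y \<or> lift A (\<tau> i) y = Some x)"
    if "i \<in> {1..n-3}" "x \<in> homs n A" "y \<in> homs n A" for i x y
  proof -
    have "\<sigma> i = fmap n i \<or> \<sigma> i = gmap n i" "\<tau> i = fmap n i \<or> \<tau> i = gmap n i"
      using assms that(1) unfolding in_Sigma_def by auto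
    thus ?thesis using fg[OF that(2,3), of i] fg[OF that(3,2), of i] by auto
  qed
  show ?thesis unfolding sstep_def using * by blast
qed

lemma sstep_sym: "(x,y) \<in> sstep n A \<sigma> \<Longrightarrow> (y,x) \<in> sstep n A \<sigma>"
  unfolding sstep_def by auto

lemma sstep_homs: "(x,y) \<in> sstep n A \<sigma> \<Longrightarrow> x \<in> homs n A \<and> y \<in> homs n A"
  unfolding sstep_def by auto

lemma trancl_same: assumes "in_Sigma n \<sigma>" shows "(x,y) \<in> (sstep n A \<sigma>)\<^sup>+ \<Longrightarrow> same A x y"
  by (induction rule: trancl_induct) (use sstep_same[OF assms] same_trans in blast)+

lemma simeq_same: "in_Sigma n \<sigma> \<Longrightarrow> (x,y) \<in> simeq n A \<sigma> \<Longrightarrow> same A x y"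
  unfolding simeq_def using trancl_same same_refl by blast

lemma simeq_trans: "(x,y) \<in> simeq n A \<sigma> \<Longrightarrow> (y,z) \<in> simeq n A \<sigma> \<Longrightarrow> (x,z) \<in> simeq n A \<sigma>"
  unfolding simeq_def by clarsimp (metis trancl_trans)

lemma trancl_sym: "(x,y) \<in> (sstep n A \<sigma>)\<^sup>+ \<Longrightarrow> (y,x) \<in> (sstep n A \<sigma>)\<^sup>+"
  by (induction rule: trancl_induct) (use sstep_sym in \<open>blast intro: trancl_into_trancl2\<close>)+

lemma simeq_sym: "(x,y) \<in> simeq n A \<sigma> \<Longrightarrow> (y,x) \<in> simeq n A \<sigma>"
  unfolding simeq_def using trancl_sym by blast

lemma simeq_step: "(x,y) \<in> sstep n A \<sigma> \<Longrightarrow> (y,z) \<in> simeq n A \<sigma> \<Longrightarrow> (x,z) \<in> simeq n A \<sigma>"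
  unfolding simeq_def using sstep_homs[of x y n A \<sigma>] by (auto intro: trancl_into_trancl2)

lemma simeq_refl: "x \<in> homs n A \<Longrightarrow> (x,x) \<in> simeq n A \<sigma>"
  unfolding simeq_def by auto

lemma gstep:
  assumes x: "x \<in> homs n A" and ha: "is_halg A" and sig: "in_Sigma n \<sigma>"
    and i: "i \<in> {1..n-3}" and nx: "\<forall>a\<in>hcarrier A. x a \<noteq> i"
  shows "(x, \<lambda>a\<in>hcarrier A. if x a = i+1 then i else x a) \<in> sstep n A \<sigma>"
proof -
  let ?y = "\<lambda>a\<in>hcarrier A. if x a = i+1 then i else x a"
  have ne: "n - 1 \<noteq> i + 1" "0 \<noteq> i + 1" "i + 1 < n" using i by auto
  define \<phi> where "\<phi> = (\<lambda>k::nat. if k = i+1 then i else k)"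
  have yeq: "?y = (\<lambda>a\<in>hcarrier A. \<phi> (x a))" by (simp add: \<phi>_def)
  have p1: "\<forall>u\<in>x`hcarrier A. \<phi> u < n" using ne homsD(2)[OF x] by (auto simp: \<phi>_def)
  have p2: "\<phi> 0 = 0" "\<phi> (n-1) = n-1" using ne by (auto simp: \<phi>_def)
  have p4: "\<forall>u\<in>x`hcarrier A. \<forall>v\<in>x`hcarrier A. u \<le> v \<longrightarrow> \<phi> u \<le> \<phi> v"
    using nx by (auto simp: \<phi>_def)
  have p5: "\<forall>u\<in>x`hcarrier A. \<forall>v\<in>x`hcarrier A. v < u \<longrightarrow> \<phi> v < \<phi> u \<or> \<phi> v = n-1"
    using nx by (auto simp: \<phi>_def)
  have y: "?y \<in> homs n A"
    unfolding yeq by (rule hom_comp[OF x ha p1 p2 p4 p5])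
  have g: "lift A (gmap n i) x = Some ?y" using nx homsD(2)[OF x] unfolding lift_gmap by auto
  have "\<sigma> i = fmap n i \<or> \<sigma> i = gmap n i" using sig i unfolding in_Sigma_def by auto
  hence "lift A (\<sigma> i) x = Some ?y \<or> lift A (\<sigma> i) ?y = Some x" using g fg[OF x y] fg[OF y x] by auto
  thus ?thesis unfolding sstep_def using x y i by auto
qed

lemma card_same:
  assumes "\<forall>a\<in>T. \<forall>b\<in>T. (x a = x b) = (y a = y b)"
  shows "card (x ` T) = card (y ` T)"
proof -
  let ?g = "\<lambda>v. y (inv_into T x v)"
  have e: "?g (x b) = y b" if "b \<in> T" for b
  proof -
    have "inv_into T x (x b) \<in> T" "x (inv_into T x (x b)) = x b"
      using that by (auto intro: inv_into_into f_inv_into_f)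
    thus ?thesis using assms that by blast
  qed
  have im: "?g ` (x ` T) = y ` T" using e by (auto simp: image_image)
  have "inj_on ?g (x ` T)"
    by (smt (verit, del_insts) assms e image_iff inj_onI)
  thus ?thesis using im card_image by fastforce
qed


definition nu :: "nat \<Rightarrow> 'a halg \<Rightarrow> ('a \<Rightarrow> nat) \<Rightarrow> ('a \<Rightarrow> nat)" where
 "nu n A x = (\<lambda>a\<in>hcarrier A. if x a = n - 1 then n - 1 else card {u \<in> x ` hcarrier A. u < x a})"

lemma hom_bot_top: assumes "x \<in> homs n A" "is_halg A"
  shows "hbot A \<in> hcarrier A" "htop A \<in> hcarrier A" "x (hbot A) = 0" "x (htop A) = n - 1"
  using assms homsD(3)[OF assms(1)] unfolding is_halg_def is_hom_def by auto

lemma nu_same: assumes x: "x \<in> homs n A" and y: "y \<in> homs n A" and s: "same A x y" and ha: "is_halg A"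
  shows "nu n A x = nu n A y"
proof -
  have top: "x a = n - 1 \<longleftrightarrow> y a = n - 1" if a: "a \<in> hcarrier A" for a
  proof -
    have "x a = n - 1 \<longleftrightarrow> x (htop A) \<le> x a" using homsD(2)[OF x a] hom_bot_top[OF x ha] by auto
    moreover have "y a = n - 1 \<longleftrightarrow> y (htop A) \<le> y a" using homsD(2)[OF y a] hom_bot_top[OF y ha] by auto
    moreover have "(x (htop A) \<le> x a) = (y (htop A) \<le> y a)"
      using s a hom_bot_top[OF x ha] unfolding same_def by blast
    ultimately show ?thesis by simp
  qed
  have cd: "card {u \<in> x ` hcarrier A. u < x a} = card {u \<in> y ` hcarrier A. u < y a}" if a: "a \<in> hcarrier A" for a
  proof -
    let ?T = "{b \<in> hcarrier A. x b < x a}"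
    have e1: "{u \<in> x ` hcarrier A. u < x a} = x ` ?T" by auto
    have T: "?T = {b \<in> hcarrier A. y b < y a}" using s a unfolding same_def by (metis (no_types, lifting) not_le)
    have e2: "{u \<in> y ` hcarrier A. u < y a} = y ` ?T" unfolding T by auto
    have "\<forall>b\<in>?T. \<forall>c\<in>?T. (x b = x c) = (y b = y c)"
    proof (intro ballI)
      fix b c assume "b \<in> ?T" "c \<in> ?T"
      hence "(x b \<le> x c) = (y b \<le> y c)" "(x c \<le> x b) = (y c \<le> y b)" using s unfolding same_def by auto
      thus "(x b = x c) = (y b = y c)" by linarith
    qed
    thus ?thesis unfolding e1 e2 by (rule card_same)
  qed
  show ?thesis unfolding nu_def using top cd by (auto intro!: restrict_ext)
qed

lemma down_closed:
  assumes d: "\<forall>v\<in>S. 2 \<le> v \<longrightarrow> v \<le> m \<longrightarrow> v - 1 \<in> S" and z: "(0::nat) \<in> S" and v: "v \<in> S"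
  shows "k \<le> v \<Longrightarrow> v \<le> m \<Longrightarrow> v - k \<in> S"
proof (induction k)
  case 0 show ?case using v by simp
next
  case (Suc k)
  have w: "v - k \<in> S" using Suc.IH Suc.prems by simp
  show ?case
  proof (cases "v - k \<ge> 2")
    case True
    moreover have "v - k \<le> m" using Suc.prems by linarith
    ultimately have "v - k - 1 \<in> S" using d w by blast
    moreover have "v - k - 1 = v - Suc k" by simp
    ultimately show ?thesis by simp
  next
    case False
    hence "v - Suc k = 0" using Suc.prems by linarith
    thus ?thesis using z by simp
  qed
qed

lemma K: assumes ha: "is_halg A" and sig: "in_Sigma n \<sigma>"
  shows "x \<in> homs n A \<Longrightarrow> (x, nu n A x) \<in> simeq n A \<sigma>"
proof (induction "\<Sum>(x ` hcarrier A)" arbitrary: x rule: less_induct)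
  case less
  note x = less.prems
  obtain S where S: "S = x ` hcarrier A" by blast
  have fin: "finite S" unfolding S
  proof (rule finite_subset[of _ "{..<n}"])
    show "x ` hcarrier A \<subseteq> {..<n}" using homsD(2)[OF x] by blast
  qed simp
  have S0: "0 \<in> S" "n - 1 \<in> S" unfolding S using hom_bot_top[OF x ha] by (metis image_eqI)+
  show ?case
  proof (cases "\<exists>v\<in>S. 2 \<le> v \<and> v \<le> n-2 \<and> v-1 \<notin> S")
    case True
    then obtain v where v: "v \<in> S" "2 \<le> v" "v \<le> n-2" "v-1 \<notin> S" by blast
    define i where "i = v - 1"
    have i: "i \<in> {1..n-3}" "i + 1 = v" using v unfolding i_def by auto
    have nx: "\<forall>a\<in>hcarrier A. x a \<noteq> i"
    proof
      fix a assume "a \<in> hcarrier A"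
      hence "x a \<in> S" unfolding S by (rule imageI)
      thus "x a \<noteq> i" using v(4) unfolding i_def by metis
    qed
    define y where "y = (\<lambda>a\<in>hcarrier A. if x a = i+1 then i else x a)"
    have st: "(x, y) \<in> sstep n A \<sigma>" unfolding y_def by (rule gstep[OF x ha sig i(1) nx])
    have y: "y \<in> homs n A" using sstep_homs[OF st] by auto
    have nuy: "nu n A y = nu n A x" using nu_same[OF x y sstep_same[OF sig st] ha] by simp
    define \<phi> where "\<phi> = (\<lambda>k::nat. if k = v then i else k)"
    have yS: "y ` hcarrier A = \<phi> ` S" unfolding S y_def \<phi>_def image_restrict_eq image_image i(2) by (rule image_cong) auto
    have inj: "inj_on \<phi> S"
    proof (rule inj_onI)
      fix u w assume uw: "u \<in> S" "w \<in> S" "\<phi> u = \<phi> w"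
      show "u = w"
      proof (cases "u = v")
        case True
        thus ?thesis using uw v(4) unfolding \<phi>_def i_def by (cases "w = v") simp_all
      next
        case False
        thus ?thesis using uw v(4) unfolding \<phi>_def i_def by (cases "w = v") simp_all
      qed
    qed
    have "\<Sum>(y ` hcarrier A) = (\<Sum>u\<in>S. \<phi> u)" unfolding yS using sum.reindex[OF inj] by simp
    also have "\<dots> < (\<Sum>u\<in>S. u)"
    proof (rule sum_strict_mono_ex1[OF fin])
      show "\<forall>u\<in>S. \<phi> u \<le> u" unfolding \<phi>_def i_def by simp
      show "\<exists>u\<in>S. \<phi> u < u" using v unfolding \<phi>_def i_def by (intro bexI[of _ v]) simp_all
    qed
    finally have lt: "\<Sum>(y ` hcarrier A) < \<Sum>(x ` hcarrier A)" unfolding S .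
    have "(y, nu n A y) \<in> simeq n A \<sigma>" using less.hyps[OF lt y] .
    thus ?thesis using simeq_step[OF st] nuy by simp
  next
    case False
    hence down: "\<forall>v\<in>S. 2 \<le> v \<longrightarrow> v \<le> n-2 \<longrightarrow> v-1 \<in> S" by blast
    have below: "v - k \<in> S" if "v \<in> S" "v < n - 1" "k \<le> v" for v k
      using down_closed[OF down S0(1) that(1), of k] that(2,3) by linarith
    have cnt: "{u \<in> S. u < v} = {..<v}" if "v \<in> S" "v < n - 1" for v
    proof -
      have "u \<in> S" if "u < v" for u
      proof -
        have "v - (v - u) \<in> S" using below[OF \<open>v \<in> S\<close> \<open>v < n-1\<close>, of "v - u"] by linarith
        moreover have "v - (v - u) = u" using that by linarith
        ultimately show ?thesis by simp
      qed
      thus ?thesis by auto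
    qed
    have "nu n A x = x"
    proof
      fix a show "nu n A x a = x a"
      proof (cases "a \<in> hcarrier A")
        case True
        show ?thesis
        proof (cases "x a = n - 1")
          case False
          hence "x a < n - 1" using homsD(2)[OF x True] by auto
          moreover have "x a \<in> S" unfolding S using True by (rule imageI)
          ultimately have "card {u \<in> S. u < x a} = x a" using cnt by simp
          thus ?thesis using True False unfolding nu_def S by simp
        qed (simp add: nu_def True)
      next
        case False thus ?thesis using homsD(1)[OF x] unfolding nu_def by (auto simp: extensional_def)
      qed
    qed
    thus ?thesis using simeq_refl[OF x] by simp
  qed
qed

lemma simeq_char: assumes ha: "is_halg A" and sig: "in_Sigma n \<sigma>"
  shows "simeq n A \<sigma> = {(x,y). x \<in> homs n A \<and> y \<in> homs n A \<and> same A x y}"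
proof -
  have "(x,y) \<in> simeq n A \<sigma>" if "x \<in> homs n A" "y \<in> homs n A" "same A x y" for x y
  proof -
    have a: "(x, nu n A x) \<in> simeq n A \<sigma>" using K[OF ha sig that(1)] .
    have b: "(y, nu n A y) \<in> simeq n A \<sigma>" using K[OF ha sig that(2)] .
    have "nu n A x = nu n A y" using nu_same[OF that ha] .
    hence "(nu n A x, y) \<in> simeq n A \<sigma>" using simeq_sym[OF b] by simp
    thus ?thesis using simeq_trans[OF a] by blast
  qed
  moreover have "x \<in> homs n A \<and> y \<in> homs n A \<and> same A x y" if "(x,y) \<in> simeq n A \<sigma>" for x y
  proof -
    have "x \<in> homs n A \<and> y \<in> homs n A" using that unfolding simeq_def by blast
    thus ?thesis using simeq_same[OF sig that] by blast
  qed
  ultimately show ?thesis by blast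
qed


definition hval :: "nat \<Rightarrow> nat \<Rightarrow> nat \<Rightarrow> nat" where
  "hval n j k = (if j \<le> k \<and> k < n - 1 then k + 1 else k)"

lemma hval_le: assumes "j \<in> {1..n-2}" "u < n" "v < n"
  shows "hval n j u \<le> hval n j v \<longleftrightarrow> (u \<le> v \<or> n - 2 \<le> v)"
  using assms unfolding hval_def by auto

lemma hval_simps: assumes "j \<in> {1..n-2}" "n \<ge> 4"
  shows "hval n j 0 = 0" "hval n j (n-1) = n-1" "u < n \<Longrightarrow> hval n j u < n"
    "n - 2 \<le> u \<Longrightarrow> u < n \<Longrightarrow> hval n j u = n - 1"
  using assms unfolding hval_def by auto

lemma h_hom: assumes z: "z \<in> homs n A" and ha: "is_halg A" and j: "j \<in> {1..n-2}" and n4: "n \<ge> 4"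
  shows "(\<lambda>a\<in>hcarrier A. hval n j (z a)) \<in> homs n A"
proof (rule hom_comp[OF z ha])
  have zl: "\<forall>u\<in>z`hcarrier A. u < n" using homsD(2)[OF z] by blast
  show "\<forall>u\<in>z`hcarrier A. hval n j u < n" using zl hval_simps[OF j n4] by blast
  show "hval n j 0 = 0" "hval n j (n-1) = n-1" using hval_simps[OF j n4] by auto
  show "\<forall>u\<in>z`hcarrier A. \<forall>v\<in>z`hcarrier A. u \<le> v \<longrightarrow> hval n j u \<le> hval n j v"
    using zl hval_le[OF j] by blast
  show "\<forall>u\<in>z`hcarrier A. \<forall>v\<in>z`hcarrier A. v < u \<longrightarrow> hval n j v < hval n j u \<or> hval n j v = n-1"
  proof (intro ballI impI)
    fix u v assume u: "u \<in> z`hcarrier A" and v: "v \<in> z`hcarrier A" and vu: "v < u"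
    have "u < n" "v < n" using u v zl by auto
    thus "hval n j v < hval n j u \<or> hval n j v = n-1"
      using hval_le[OF j, of u v] hval_simps(4)[OF j n4, of v] vu by linarith
  qed
qed

lemma lift_h: assumes "z \<in> homs n A"
  shows "lift A (hmap n j) z = Some (\<lambda>a\<in>hcarrier A. hval n j (z a))"
  using homsD(2)[OF assms] unfolding lift_hmap hval_def by auto

lemma h_same: assumes z: "z \<in> homs n A" and j: "j \<in> {1..n-2}" and j': "j' \<in> {1..n-2}"
  shows "same A (\<lambda>a\<in>hcarrier A. hval n j (z a)) (\<lambda>a\<in>hcarrier A. hval n j' (z a))"
  unfolding same_def using hval_le[OF j] hval_le[OF j'] homsD(2)[OF z] by simp

lemma sig_top: "in_Sigma n \<sigma> \<Longrightarrow> \<exists>j\<in>{1..n-2}. \<sigma> (n-2) = hmap n j"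
  unfolding in_Sigma_def by blast

definition cls :: "nat \<Rightarrow> 'a halg \<Rightarrow> ('a \<Rightarrow> nat) \<Rightarrow> ('a \<Rightarrow> nat) set" where
  "cls n A x = {y \<in> homs n A. same A x y}"

lemma classes_char: assumes "is_halg A" "in_Sigma n \<sigma>"
  shows "classes n A \<sigma> = cls n A ` homs n A"
  unfolding classes_def quotient_def simeq_char[OF assms] cls_def by auto

lemma cls_mem: "x \<in> homs n A \<Longrightarrow> x \<in> cls n A x"
  unfolding cls_def using same_refl by auto

lemma cls_eq: "y \<in> cls n A x \<Longrightarrow> cls n A y = cls n A x"
  unfolding cls_def using same_sym same_trans by blast

lemma cls_disj: "z \<in> cls n A x \<Longrightarrow> z \<in> cls n A y \<Longrightarrow> cls n A x = cls n A y"
  using cls_eq by metis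

definition rk :: "'a halg \<Rightarrow> ('a \<Rightarrow> nat) \<Rightarrow> nat" where
  "rk A x = card (x ` hcarrier A)"

lemma rk_same: "same A x y \<Longrightarrow> rk A x = rk A y"
  unfolding rk_def
proof (rule card_same, intro ballI)
  fix a b assume "same A x y" "a \<in> hcarrier A" "b \<in> hcarrier A"
  hence "(x a \<le> x b) = (y a \<le> y b)" "(x b \<le> x a) = (y b \<le> y a)" unfolding same_def by auto
  thus "(x a = x b) = (y a = y b)" by linarith
qed

lemma rk_bounds: assumes x: "x \<in> homs n A" and ha: "is_halg A" and n4: "n \<ge> 4"
  shows "2 \<le> rk A x" "rk A x \<le> n"
proof -
  have sub: "x ` hcarrier A \<subseteq> {..<n}" using homsD(2)[OF x] by blast
  show "rk A x \<le> n" unfolding rk_def using card_mono[OF _ sub] by simp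
  have "{0, n-1} \<subseteq> x ` hcarrier A" using hom_bot_top[OF x ha] by (metis empty_subsetI image_eqI insert_subset)
  moreover have "finite (x ` hcarrier A)" using finite_subset[OF sub] by simp
  ultimately have "card {0, n-1} \<le> rk A x" unfolding rk_def by (rule card_mono[rotated])
  thus "2 \<le> rk A x" using n4 by simp
qed


lemma classes_sub: assumes "is_halg A" "in_Sigma n \<sigma>" "c \<in> classes n A \<sigma>"
  shows "\<exists>x\<in>homs n A. c = cls n A x" "c \<subseteq> homs n A"
  using assms classes_char[OF assms(1,2)] unfolding cls_def by auto

lemma prec_D: assumes "(c,d) \<in> prec n A \<sigma>" "in_Sigma n \<sigma>"
  obtains j z w where "j \<in> {1..n-2}" "\<sigma> (n-2) = hmap n j" "z \<in> c" "w \<in> d"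
    "lift A (hmap n j) z = Some w" "c \<in> classes n A \<sigma>" "d \<in> classes n A \<sigma>" "c \<noteq> d"
proof -
  have h: "c \<in> classes n A \<sigma> \<and> d \<in> classes n A \<sigma> \<and> c \<noteq> d \<and> (\<exists>z\<in>c. \<exists>w\<in>d. lift A (\<sigma> (n-2)) z = Some w)"
    using assms(1) unfolding prec_def by blast
  obtain j where j: "j \<in> {1..n-2}" "\<sigma> (n-2) = hmap n j" using sig_top[OF assms(2)] by blast
  from h obtain z w where "z \<in> c" "w \<in> d" "lift A (\<sigma> (n-2)) z = Some w" by blast
  thus ?thesis using that j h by metis
qed

lemma prec_sub: assumes ha: "is_halg A" and s: "in_Sigma n \<sigma>" and t: "in_Sigma n \<tau>" and n4: "n \<ge> 4"
  shows "prec n A \<sigma> \<subseteq> prec n A \<tau>"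
proof
  fix p assume "p \<in> prec n A \<sigma>"
  then obtain c d where p: "p = (c,d)" "(c,d) \<in> prec n A \<sigma>" by (cases p) auto
  then obtain j z w where jzw: "j \<in> {1..n-2}" "\<sigma> (n-2) = hmap n j" "z \<in> c" "w \<in> d"
    "lift A (hmap n j) z = Some w" "c \<in> classes n A \<sigma>" "d \<in> classes n A \<sigma>" "c \<noteq> d"
    using prec_D[OF p(2) s] by metis
  obtain j' where j': "j' \<in> {1..n-2}" "\<tau> (n-2) = hmap n j'" using sig_top[OF t] by blast
  have z: "z \<in> homs n A" using classes_sub[OF ha s jzw(6)] jzw(3) by blast
  have w: "w = (\<lambda>a\<in>hcarrier A. hval n j (z a))" using jzw(5) lift_h[OF z] by simp
  define w' where "w' = (\<lambda>a\<in>hcarrier A. hval n j' (z a))"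
  have w'h: "w' \<in> homs n A" unfolding w'_def by (rule h_hom[OF z ha j'(1) n4])
  have sw: "same A w w'" unfolding w w'_def by (rule h_same[OF z jzw(1) j'(1)])
  obtain x0 where x0: "x0 \<in> homs n A" "d = cls n A x0" using classes_sub[OF ha s jzw(7)] by blast
  have "d = cls n A w" using cls_eq jzw(4) x0(2) by metis
  hence w'd: "w' \<in> d" using w'h sw unfolding cls_def by auto
  have cl: "classes n A \<sigma> = classes n A \<tau>" using classes_char[OF ha s] classes_char[OF ha t] by simp
  have "lift A (\<tau> (n-2)) z = Some w'" using lift_h[OF z] j'(2) w'_def by simp
  thus "p \<in> prec n A \<tau>" unfolding p prec_def using jzw cl w'd by auto
qed

lemma prec_rank: assumes ha: "is_halg A" and s: "in_Sigma n \<sigma>" and n4: "n \<ge> 4"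
  and cd: "(c,d) \<in> prec n A \<sigma>" and x: "x \<in> c" and y: "y \<in> d"
  shows "rk A x = rk A y + 1"
proof -
  obtain j z w where jzw: "j \<in> {1..n-2}" "\<sigma> (n-2) = hmap n j" "z \<in> c" "w \<in> d"
    "lift A (hmap n j) z = Some w" "c \<in> classes n A \<sigma>" "d \<in> classes n A \<sigma>" "c \<noteq> d"
    using prec_D[OF cd s] by metis
  have z: "z \<in> homs n A" using classes_sub[OF ha s jzw(6)] jzw(3) by blast
  have w: "w = (\<lambda>a\<in>hcarrier A. hval n j (z a))" using jzw(5) lift_h[OF z] by simp
  have wh: "w \<in> homs n A" unfolding w by (rule h_hom[OF z ha jzw(1) n4])
  obtain x0 where x0: "d = cls n A x0" using classes_sub[OF ha s jzw(7)] by blast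
  have dw: "d = cls n A w" using cls_eq jzw(4) x0 by metis
  obtain x1 where x1: "c = cls n A x1" using classes_sub[OF ha s jzw(6)] by blast
  have cz: "c = cls n A z" using cls_eq jzw(3) x1 by metis
  have rx: "rk A x = rk A z" using x cz unfolding cls_def by (auto intro: rk_same[symmetric])
  have ry: "rk A y = rk A w" using y dw unfolding cls_def by (auto intro: rk_same[symmetric])
  obtain S where S: "S = z ` hcarrier A" by blast
  have Sn: "\<forall>u\<in>S. u < n" using homsD(2)[OF z] S by blast
  have fin: "finite S" using Sn by (meson finite_subset lessThan_iff subsetI finite_lessThan)
  have top: "n - 1 \<in> S" using hom_bot_top[OF z ha] S by (metis image_eqI)
  have wS: "w ` hcarrier A = hval n j ` S" unfolding w S image_restrict_eq image_image ..
  show ?thesis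
  proof (cases "n - 2 \<in> S")
    case True
    have e: "hval n j ` S = hval n j ` (S - {n-1})"
    proof
      show "hval n j ` S \<subseteq> hval n j ` (S - {n-1})"
      proof
        fix t assume "t \<in> hval n j ` S"
        then obtain u where u: "u \<in> S" "t = hval n j u" by blast
        show "t \<in> hval n j ` (S - {n-1})"
        proof (cases "u = n - 1")
          case True
          have "hval n j (n-2) = n-1" "hval n j (n-1) = n-1"
            using hval_simps(2)[OF jzw(1) n4] hval_simps(4)[OF jzw(1) n4, of "n-2"] n4 by auto
          moreover have "n - 2 \<in> S - {n-1}" using \<open>n - 2 \<in> S\<close> n4 by auto
          ultimately show ?thesis using u True by (metis image_eqI)
        qed (use u in auto)
      qed
    qed auto
    have inj: "inj_on (hval n j) (S - {n-1})"
    proof (rule inj_onI)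
      fix u v assume u: "u \<in> S - {n-1}" and v: "v \<in> S - {n-1}" and h: "hval n j u = hval n j v"
      have "u < n - 1" "v < n - 1" using u v Sn by auto
      thus "u = v" using h unfolding hval_def by (auto split: if_splits)
    qed
    have "rk A w = card (S - {n-1})" unfolding rk_def wS e using card_image[OF inj] .
    also have "\<dots> = card S - 1" using top fin by simp
    finally have "rk A w = rk A z - 1" unfolding rk_def S .
    moreover have "2 \<le> rk A z" using rk_bounds[OF z ha n4] by simp
    ultimately show ?thesis using rx ry by simp
  next
    case False
    have "same A z w" unfolding same_def
    proof (intro ballI)
      fix a b assume a: "a \<in> hcarrier A" and b: "b \<in> hcarrier A"
      have "z a \<in> S" "z b \<in> S" using a b S by auto
      hence "z a < n" "z b < n" "z b \<noteq> n - 2" using Sn False by auto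
      thus "(z a \<le> z b) = (w a \<le> w b)" unfolding w using a b hval_le[OF jzw(1), of "z a" "z b"] by auto
    qed
    hence "w \<in> cls n A z" using wh unfolding cls_def by auto
    hence "d = c" using dw cz cls_eq by metis
    thus ?thesis using jzw(8) by simp
  qed
qed


definition rkc :: "'a halg \<Rightarrow> ('a \<Rightarrow> nat) set \<Rightarrow> nat" where
  "rkc A c = rk A (SOME x. x \<in> c)"

lemma rkc: assumes ha: "is_halg A" and s: "in_Sigma n \<sigma>" and c: "c \<in> classes n A \<sigma>" and x: "x \<in> c"
  shows "rkc A c = rk A x"
proof -
  obtain x0 where x0: "c = cls n A x0" using classes_sub[OF ha s c] by blast
  have sx: "(SOME x. x \<in> c) \<in> c" using someI[of "\<lambda>y. y \<in> c" x] x by blast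
  have "rk A x0 = rk A (SOME x. x \<in> c)" "rk A x0 = rk A x"
    using sx x x0 unfolding cls_def by (auto intro: rk_same)
  thus ?thesis unfolding rkc_def by simp
qed

lemma class_ne: assumes ha: "is_halg A" and s: "in_Sigma n \<sigma>" and c: "c \<in> classes n A \<sigma>"
  shows "\<exists>x. x \<in> c"
  using classes_sub[OF ha s c] cls_mem by blast

lemma prec_rkc: assumes ha: "is_halg A" and s: "in_Sigma n \<sigma>" and n4: "n \<ge> 4"
  and cd: "(c,d) \<in> prec n A \<sigma>" shows "rkc A c = rkc A d + 1"
proof -
  have cl: "c \<in> classes n A \<sigma>" "d \<in> classes n A \<sigma>" using cd unfolding prec_def by auto
  obtain x y where "x \<in> c" "y \<in> d" using class_ne[OF ha s cl(1)] class_ne[OF ha s cl(2)] by blast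
  thus ?thesis using prec_rank[OF ha s n4 cd] rkc[OF ha s cl(1)] rkc[OF ha s cl(2)] by simp
qed

lemma leq_rkc: assumes ha: "is_halg A" and s: "in_Sigma n \<sigma>" and n4: "n \<ge> 4"
  and cd: "(c,d) \<in> leq n A \<sigma>" shows "c = d \<or> rkc A d < rkc A c"
proof -
  have "(c,d) \<in> (prec n A \<sigma>)\<^sup>*" using cd unfolding leq_def by auto
  thus ?thesis
  proof (induction rule: rtrancl_induct)
    case (step e d)
    thus ?case using prec_rkc[OF ha s n4 step(2)] by auto
  qed simp
qed

lemma rkc_bounds: assumes ha: "is_halg A" and s: "in_Sigma n \<sigma>" and n4: "n \<ge> 4"
  and c: "c \<in> classes n A \<sigma>" shows "rkc A c \<in> {2..n}"
proof -
  obtain x where x: "x \<in> c" using class_ne[OF ha s c] by blast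
  have "x \<in> homs n A" using classes_sub[OF ha s c] x by blast
  thus ?thesis using rk_bounds[OF _ ha n4] rkc[OF ha s c x] by simp
qed

theorem lemma4p2:
  fixes n :: nat and A :: "'a halg" and \<sigma> \<tau> :: "nat \<Rightarrow> (nat \<Rightarrow> nat option)"
  assumes "n \<ge> 4"
    and "in_Sigma n \<sigma>" and "in_Sigma n \<tau>"
    and "in_Gn TYPE('i) n A"
  shows "simeq n A \<sigma> = simeq n A \<tau> \<and>
         leq n A \<sigma> = leq n A \<tau> \<and>
         partial_order_on (classes n A \<sigma>) (leq n A \<sigma>) \<and>
         depth_le (classes n A \<sigma>) (leq n A \<sigma>) (n - 2) \<and>
         covers (leq n A \<sigma>) = prec n A \<sigma>"
proof -
  note n4 = assms(1) and s = assms(2) and t = assms(3)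
  have ha: "is_halg A" using assms(4) unfolding in_Gn_def by blast
  have P1: "simeq n A \<sigma> = simeq n A \<tau>" using simeq_char[OF ha s] simeq_char[OF ha t] by simp
  have cl: "classes n A \<sigma> = classes n A \<tau>" using classes_char[OF ha s] classes_char[OF ha t] by simp
  have pr: "prec n A \<sigma> = prec n A \<tau>" using prec_sub[OF ha s t n4] prec_sub[OF ha t s n4] by blast
  have P2: "leq n A \<sigma> = leq n A \<tau>" unfolding leq_def cl pr ..
  let ?P = "classes n A \<sigma>" and ?r = "leq n A \<sigma>"
  have rcl: "(c,d) \<in> ?r \<Longrightarrow> c \<in> ?P \<and> d \<in> ?P" for c d unfolding leq_def by auto
  have antis: "c = d" if "(c,d) \<in> ?r" "(d,c) \<in> ?r" for c d
    using leq_rkc[OF ha s n4 that(1)] leq_rkc[OF ha s n4 that(2)] by auto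
  have P3: "partial_order_on ?P ?r"
    unfolding partial_order_on_def preorder_on_def refl_on_def antisym_on_def
  proof (intro conjI)
    show "?r \<subseteq> ?P \<times> ?P" using rcl by auto
    show "\<forall>x\<in>?P. (x, x) \<in> ?r" unfolding leq_def by auto
    show "trans ?r" unfolding trans_def leq_def by (auto intro: rtrancl_trans)
    show "\<forall>x\<in>UNIV. \<forall>y\<in>UNIV. (x, y) \<in> ?r \<longrightarrow> (y, x) \<in> ?r \<longrightarrow> x = y" using antis by blast
  qed
  have P4: "depth_le ?P ?r (n - 2)"
    unfolding depth_le_def
  proof (intro conjI ballI allI impI notI)
    fix p assume p: "p \<in> ?P"
    assume "\<exists>f. f 0 = p \<and> (\<forall>m. (f m, f (Suc m)) \<in> ?r \<and> f m \<noteq> f (Suc m))"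
    then obtain f where f: "f 0 = p" "\<And>m. (f m, f (Suc m)) \<in> ?r" "\<And>m. f m \<noteq> f (Suc m)" by blast
    have "rkc A (f m) + m \<le> rkc A p" for m
    proof (induction m)
      case (Suc m)
      have "rkc A (f (Suc m)) < rkc A (f m)" using leq_rkc[OF ha s n4 f(2)[of m]] f(3)[of m] by auto
      thus ?case using Suc by simp
    qed (simp add: f(1))
    from this[of "Suc (rkc A p)"] show False by simp
  next
    fix p C assume p: "p \<in> ?P" and C: "C \<subseteq> {q \<in> ?P. (p, q) \<in> ?r} \<and> (\<forall>a\<in>C. \<forall>b\<in>C. (a, b) \<in> ?r \<or> (b, a) \<in> ?r)"
    have inj: "inj_on (rkc A) C"
    proof (rule inj_onI)
      fix a b assume "a \<in> C" "b \<in> C" "rkc A a = rkc A b"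
      thus "a = b" using C leq_rkc[OF ha s n4, of a b] leq_rkc[OF ha s n4, of b a] by force
    qed
    have im: "rkc A ` C \<subseteq> {2..n}" using C rkc_bounds[OF ha s n4] by blast
    show fin: "finite C" using finite_subset[OF im] inj by (simp add: finite_image_iff)
    have "card C = card (rkc A ` C)" using card_image[OF inj] by simp
    also have "\<dots> \<le> card {2..n}" using card_mono[OF _ im] by simp
    finally have "card C \<le> n - 1" by simp
    thus "card C - 1 \<le> n - 2" by simp
  qed
  have P5: "covers ?r = prec n A \<sigma>"
  proof
    show "covers ?r \<subseteq> prec n A \<sigma>"
    proof
      fix q assume q: "q \<in> covers ?r"
      then obtain c d where cd: "q = (c,d)" by (cases q) auto
      have h: "(c,d) \<in> ?r" "c \<noteq> d" "\<not> (\<exists>e. (c, e) \<in> ?r \<and> (e, d) \<in> ?r \<and> e \<noteq> c \<and> e \<noteq> d)"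
        using q unfolding cd covers_def by auto
      have "(c,d) \<in> (prec n A \<sigma>)\<^sup>*" using h(1) unfolding leq_def by auto
      then obtain e where e: "(c,e) \<in> prec n A \<sigma>" "(e,d) \<in> (prec n A \<sigma>)\<^sup>*"
        using h(2) by (metis converse_rtranclE)
      have ecl: "c \<in> ?P" "e \<in> ?P" "c \<noteq> e" using e(1) unfolding prec_def by auto
      have "d \<in> ?P" using rcl[OF h(1)] by simp
      have "(c,e) \<in> ?r" using e(1) ecl unfolding leq_def by auto
      moreover have "(e,d) \<in> ?r" using e(2) ecl \<open>d \<in> ?P\<close> unfolding leq_def by auto
      ultimately have "e = d" using h(3) ecl(3) by blast
      thus "q \<in> prec n A \<sigma>" using e(1) cd by simp
    qed
    show "prec n A \<sigma> \<subseteq> covers ?r"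
    proof
      fix q assume q: "q \<in> prec n A \<sigma>"
      then obtain c d where cd: "q = (c,d)" by (cases q) auto
      have pc: "(c,d) \<in> prec n A \<sigma>" using q cd by simp
      have h: "c \<in> ?P" "d \<in> ?P" "c \<noteq> d" using pc unfolding prec_def by auto
      have r: "(c,d) \<in> ?r" using pc h unfolding leq_def by auto
      have rk: "rkc A c = rkc A d + 1" using prec_rkc[OF ha s n4 pc] .
      have "\<not> (\<exists>e. (c, e) \<in> ?r \<and> (e, d) \<in> ?r \<and> e \<noteq> c \<and> e \<noteq> d)"
      proof
        assume "\<exists>e. (c, e) \<in> ?r \<and> (e, d) \<in> ?r \<and> e \<noteq> c \<and> e \<noteq> d"
        then obtain e where e: "(c, e) \<in> ?r" "(e, d) \<in> ?r" "e \<noteq> c" "e \<noteq> d" by blast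
        have "rkc A e < rkc A c" "rkc A d < rkc A e"
          using leq_rkc[OF ha s n4 e(1)] leq_rkc[OF ha s n4 e(2)] e(3,4) by auto
        thus False using rk by simp
      qed
      thus "q \<in> covers ?r" unfolding cd covers_def using r h by auto
    qed
  qed
  show ?thesis using P1 P2 P3 P4 P5 by blast
qed

end
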